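(* Assume the setting below and suppose $\tau\le0$ and $|x_0^{(1)}|>a$. Let $r_0=\lceil\log_2(|x_0^{(1)}|/a)\rceil$. Then (with probability one) there is $j\le r_0$ such that $|x_j^{(1)}|<a$, and moreover $|x_k^{(1)}|<a$ for all $k\ge j$.
   Context: Let $n\ge2$, $a\ge\sqrt{n-1}$, $f(x)=a|x^{(1)}|+\sum_{i=2}^n x^{(i)}$ on $\mathbb{R}^n$ ($x^{(i)}$ the $i$-th coordinate), $0<c_1<c_2<1$, and $\tau=c_1+\frac{(n-1)(c_1-1)}{a^2}$. The initial point $x_0$ is drawn from the normal distribution on $\mathbb{R}^n$ (independently of $a$), and $x_{k+1}=x_k+t_kd_k$, $d_k=-\nabla f(x_k)$, where $t_k$ is returned by the following Armijo–Wolfe bracketing line search: set $\alpha=0$, $\beta=+\infty$, $t=1$; repeat: if $A(t)$ fails set $\beta\leftarrow t$; else if $W(t)$ fails set $\alpha\leftarrow t$; else stop and return $t$; then if $\beta<+\infty$ set $t\leftarrow(\alpha+\beta)/2$, otherwise $t\leftarrow2\alpha$. Here $A(t)$: $f(x_k+td_k)\le f(x_k)+c_1t\nabla f(x_k)^Td_k$, and $W(t)$: $f$ is differentiable at $x_k+td_k$ and $\nabla f(x_k+td_k)^Td_k\ge c_2\nabla f(x_k)^Td_k$. All statements are understood to hold with probability one. *)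

theory Defs
  imports "HOL-Probability.Probability"
begin

text \<open>Objective f(x) = a |x_p| + sum over the other coordinates, on real^'n.
  The distinguished coordinate p plays the role of the first coordinate.\<close>
definition fobj :: "real \<Rightarrow> 'n::finite \<Rightarrow> real^'n \<Rightarrow> real" where
  "fobj a p x = a * \<bar>x $ p\<bar> + (\<Sum>i\<in>UNIV - {p}. x $ i)"

definition grad :: "(real^'n::finite \<Rightarrow> real) \<Rightarrow> real^'n \<Rightarrow> real^'n" where
  "grad f x = (SOME g. (f has_derivative (\<lambda>h. g \<bullet> h)) (at x))"

definition armijo :: "(real^'n::finite \<Rightarrow> real) \<Rightarrow> real \<Rightarrow> real^'n \<Rightarrow> real^'n \<Rightarrow> real \<Rightarrow> bool" where
  "armijo f c1 x d t \<longleftrightarrow> f (x + t *\<^sub>R d) \<le> f x + c1 * t * (grad f x \<bullet> d)"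

definition wolfe :: "(real^'n::finite \<Rightarrow> real) \<Rightarrow> real \<Rightarrow> real^'n \<Rightarrow> real^'n \<Rightarrow> real \<Rightarrow> bool" where
  "wolfe f c2 x d t \<longleftrightarrow> f differentiable (at (x + t *\<^sub>R d)) \<and>
     grad f (x + t *\<^sub>R d) \<bullet> d \<ge> c2 * (grad f x \<bullet> d)"

text \<open>State (alpha, beta, t) of the bracketing line search after i iterations;
  beta = None encodes beta = +infinity. Initially alpha = 0, beta = +inf, t = 1.\<close>
primrec ls_state :: "(real^'n::finite \<Rightarrow> real) \<Rightarrow> real \<Rightarrow> real \<Rightarrow> real^'n \<Rightarrow> real^'n \<Rightarrow> nat
    \<Rightarrow> real \<times> real option \<times> real" where
  "ls_state f c1 c2 x d 0 = (0, None, 1)"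
| "ls_state f c1 c2 x d (Suc i) =
     (case ls_state f c1 c2 x d i of (\<alpha>, \<beta>, t) \<Rightarrow>
        let (\<alpha>', \<beta>') = (if \<not> armijo f c1 x d t then (\<alpha>, Some t)
                         else if \<not> wolfe f c2 x d t then (t, \<beta>)
                         else (\<alpha>, \<beta>))
        in (\<alpha>', \<beta>', (case \<beta>' of Some b \<Rightarrow> (\<alpha>' + b) / 2 | None \<Rightarrow> 2 * \<alpha>')))"

definition ls_trial :: "(real^'n::finite \<Rightarrow> real) \<Rightarrow> real \<Rightarrow> real \<Rightarrow> real^'n \<Rightarrow> real^'n \<Rightarrow> nat \<Rightarrow> real" where
  "ls_trial f c1 c2 x d i = snd (snd (ls_state f c1 c2 x d i))"

definition ls_returns :: "(real^'n::finite \<Rightarrow> real) \<Rightarrow> real \<Rightarrow> real \<Rightarrow> real^'n \<Rightarrow> real^'n \<Rightarrow> real \<Rightarrow> bool" where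
  "ls_returns f c1 c2 x d t \<longleftrightarrow>
     (\<exists>i. armijo f c1 x d (ls_trial f c1 c2 x d i) \<and> wolfe f c2 x d (ls_trial f c1 c2 x d i) \<and>
          (\<forall>j<i. \<not> (armijo f c1 x d (ls_trial f c1 c2 x d j) \<and> wolfe f c2 x d (ls_trial f c1 c2 x d j))) \<and>
          t = ls_trial f c1 c2 x d i)"

definition gd_seq :: "(real^'n::finite \<Rightarrow> real) \<Rightarrow> real \<Rightarrow> real \<Rightarrow> (nat \<Rightarrow> real^'n) \<Rightarrow> bool" where
  "gd_seq f c1 c2 xs \<longleftrightarrow>
     (\<forall>k. f differentiable (at (xs k)) \<and>
          (\<exists>t. ls_returns f c1 c2 (xs k) (- grad f (xs k)) t \<and>
               xs (Suc k) = xs k + t *\<^sub>R (- grad f (xs k))))"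

definition std_gauss :: "(real^'n::finite) measure" where
  "std_gauss = density lborel (\<lambda>x. ennreal (\<Prod>i\<in>UNIV. std_normal_density (x $ i)))"

end

theory Submission
  imports Defs
begin


definition G :: "real \<Rightarrow> 'n::finite \<Rightarrow> real^'n \<Rightarrow> real^'n" where
  "G a p x = (\<chi> i. if i = p then a * sgn (x $ p) else 1)"

lemma inner_G: "G a p x \<bullet> y = a * sgn (x $ p) * y $ p + (\<Sum>i\<in>UNIV - {p}. y $ i)"
  unfolding G_def inner_vec_def
  by (simp add: sum.remove[of UNIV p])

lemma fobj_hasderiv:
  fixes x :: "real^'n::finite"
  assumes "x $ p \<noteq> 0"
  shows "(fobj a p has_derivative (\<lambda>h. G a p x \<bullet> h)) (at x)"
proof -
  let ?s = "sgn (x $ p)"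
  have "((\<lambda>y. G a p x \<bullet> y) has_derivative (\<lambda>h. G a p x \<bullet> h)) (at x)"
    by (rule bounded_linear_imp_has_derivative) (rule bounded_linear_inner_right)
  moreover have "open {y::real^'n. ?s * y $ p > 0}"
  proof (cases "x $ p > 0")
    case True thus ?thesis using open_halfspace_component_gt_cart[where i=p and a=0] by simp
  next
    case False thus ?thesis using assms open_halfspace_component_lt_cart[where i=p and a=0]
      by (simp add: sgn_if)
  qed
  moreover have "x \<in> {y::real^'n. ?s * y $ p > 0}" using assms
    by (simp add: sgn_if)
  moreover have "G a p x \<bullet> y = fobj a p y" if "y \<in> {y::real^'n. ?s * y $ p > 0}" for y
  proof -
    have "\<bar>y $ p\<bar> = ?s * y $ p" using that assms by (auto simp: sgn_if)
    thus ?thesis by (simp add: inner_G fobj_def)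
  qed
  ultimately show ?thesis
    by (rule has_derivative_transform_within_open)
qed

lemma grad_eq:
  assumes "x $ p \<noteq> 0"
  shows "grad (fobj a p) x = G a p x"
proof -
  have d: "(fobj a p has_derivative (\<lambda>h. G a p x \<bullet> h)) (at x)" by (rule fobj_hasderiv[OF assms])
  have "(fobj a p has_derivative (\<lambda>h. grad (fobj a p) x \<bullet> h)) (at x)"
    unfolding grad_def by (rule someI, rule d)
  from has_derivative_unique[OF this d] have "(\<lambda>h. grad (fobj a p) x \<bullet> h) = (\<lambda>h. G a p x \<bullet> h)" .
  hence "grad (fobj a p) x \<bullet> (grad (fobj a p) x - G a p x) = G a p x \<bullet> (grad (fobj a p) x - G a p x)"
    by metis
  hence "(grad (fobj a p) x - G a p x) \<bullet> (grad (fobj a p) x - G a p x) = 0"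
    by (simp add: inner_diff_left)
  thus ?thesis by simp
qed

lemma fobj_diff: "x $ p \<noteq> 0 \<Longrightarrow> fobj a p differentiable (at x)"
  using fobj_hasderiv differentiable_def by blast




lemma abs_not_diff: "\<not> (abs :: real \<Rightarrow> real) differentiable (at 0)"
proof
  assume "(abs :: real \<Rightarrow> real) differentiable (at 0)"
  then obtain D where "(abs has_real_derivative D) (at (0::real))"
    using real_differentiable_def by blast
  hence L: "((\<lambda>y::real. \<bar>y\<bar> / y) \<longlongrightarrow> D) (at 0)"
    by (simp add: has_field_derivative_iff)
  have "((\<lambda>y::real. \<bar>y\<bar> / y) \<longlongrightarrow> D) (at_right 0)"
    using L by (rule tendsto_mono[rotated]) (simp add: at_within_le_at)
  moreover have "((\<lambda>y::real. \<bar>y\<bar> / y) \<longlongrightarrow> 1) (at_right 0)"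
    by (rule tendsto_eventually) (auto simp: eventually_at_right_field intro: exI[of _ 1])
  ultimately have "D = 1" using tendsto_unique trivial_limit_at_right_real by blast
  have "((\<lambda>y::real. \<bar>y\<bar> / y) \<longlongrightarrow> D) (at_left 0)"
    using L by (rule tendsto_mono[rotated]) (simp add: at_within_le_at)
  moreover have "((\<lambda>y::real. \<bar>y\<bar> / y) \<longlongrightarrow> -1) (at_left 0)"
    by (rule tendsto_eventually) (auto simp: eventually_at_left_field intro: exI[of _ "-1"])
  ultimately have "D = -1" using tendsto_unique trivial_limit_at_left_real by blast
  with \<open>D = 1\<close> show False by simp
qed

lemma fobj_nondiff:
  fixes x :: "real^'n::finite"
  assumes "x $ p = 0" "a \<noteq> 0"
  shows "\<not> fobj a p differentiable (at x)"
proof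
  assume d: "fobj a p differentiable (at x)"
  let ?C = "\<Sum>i\<in>UNIV - {p}. x $ i"
  have l: "(\<lambda>s::real. x + s *\<^sub>R axis p 1) differentiable (at 0)"
    by (intro derivative_intros)
  have "(fobj a p \<circ> (\<lambda>s::real. x + s *\<^sub>R axis p 1)) differentiable (at 0)"
    by (rule differentiable_chain_at[OF l]) (simp add: d)
  moreover have "(fobj a p \<circ> (\<lambda>s::real. x + s *\<^sub>R axis p 1)) = (\<lambda>s. a * \<bar>s\<bar> + ?C)"
    using assms by (auto simp: fobj_def axis_def intro!: sum.cong)
  ultimately have "(\<lambda>s. a * \<bar>s\<bar> + ?C) differentiable (at (0::real))" by simp
  from differentiable_diff[OF this differentiable_const[of ?C]]
  have "(\<lambda>s. a * \<bar>s\<bar>) differentiable (at (0::real))" by simp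
  hence "(\<lambda>s. \<bar>s\<bar>) differentiable (at (0::real))" using assms(2)
    by (simp only: differentiable_cmult_left_iff) simp
  moreover have "(\<lambda>s::real. \<bar>s\<bar>) = abs" by (rule ext) simp
  ultimately show False using abs_not_diff by simp
qed




lemma card_minus_p: "real (card (UNIV - {p::'n::finite})) = real CARD('n) - 1"
  by (simp add: card_Diff_singleton of_nat_diff card_ge_0_finite Suc_leI)

lemma sgn_sq: "(x::real) \<noteq> 0 \<Longrightarrow> sgn x * sgn x = 1"
  by (simp add: sgn_if)

lemma line_p:
  fixes x :: "real^'n::finite"
  shows "(x + t *\<^sub>R (- G a p x)) $ p = sgn (x $ p) * (\<bar>x $ p\<bar> - t * a)"
  by (auto simp: G_def sgn_if algebra_simps)

lemma line_fobj:
  fixes x :: "real^'n::finite"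
  assumes "x $ p \<noteq> 0"
  shows "fobj a p (x + t *\<^sub>R (- G a p x)) = a * \<bar>\<bar>x $ p\<bar> - t * a\<bar> + (\<Sum>i\<in>UNIV - {p}. x $ i) - t * (real CARD('n) - 1)"
proof -
  have "(\<Sum>i\<in>UNIV - {p}. (x + t *\<^sub>R (- G a p x)) $ i) = (\<Sum>i\<in>UNIV - {p}. x $ i - t)"
    by (rule sum.cong) (auto simp: G_def)
  also have "\<dots> = (\<Sum>i\<in>UNIV - {p}. x $ i) - t * (real CARD('n) - 1)"
    by (simp add: sum_subtractf card_minus_p)
  moreover have "\<bar>(x + t *\<^sub>R (- G a p x)) $ p\<bar> = \<bar>\<bar>x $ p\<bar> - t * a\<bar>"
    by (simp only: line_p abs_mult) (simp add: assms)
  ultimately show ?thesis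
    unfolding fobj_def by simp
qed

lemma G_inner_d:
  fixes x :: "real^'n::finite"
  assumes "x $ p \<noteq> 0"
  shows "G a p x \<bullet> (- G a p x) = - (a\<^sup>2 + (real CARD('n) - 1))"
proof -
  have "G a p x \<bullet> (- G a p x) = a * sgn (x $ p) * (- a * sgn (x $ p)) + (\<Sum>i\<in>UNIV - {p}. - 1)"
    by (simp add: inner_G) (simp add: G_def)
  also have "\<dots> = - (a\<^sup>2 + (real CARD('n) - 1))"
    using sgn_sq[OF assms] card_minus_p[of p] by (simp add: power2_eq_square algebra_simps)
  finally show ?thesis .
qed

lemma armijo_iff:
  fixes x :: "real^'n::finite"
  assumes xp: "x $ p \<noteq> 0" and a: "a > 0" and c1: "0 < c1" "c1 \<le> 1"
    and N: "real CARD('n) - 1 \<le> a\<^sup>2" "0 \<le> real CARD('n) - 1"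
    and tau: "c1 * a\<^sup>2 + (real CARD('n) - 1) * (c1 - 1) \<le> 0"
    and t: "0 \<le> t"
  shows "armijo (fobj a p) c1 x (- grad (fobj a p) x) t \<longleftrightarrow>
     t * (a\<^sup>2 * (1 + c1) + (real CARD('n) - 1) * (c1 - 1)) \<le> 2 * a * \<bar>x $ p\<bar> \<or> t * a \<le> \<bar>x $ p\<bar>"
proof -
  define N where "N = real CARD('n) - 1"
  define u where "u = \<bar>x $ p\<bar>"
  have u: "u > 0" using xp by (simp add: u_def)
  have f0: "fobj a p x = a * u + (\<Sum>i\<in>UNIV - {p}. x $ i)"
    by (simp add: fobj_def u_def)
  have arm: "armijo (fobj a p) c1 x (- grad (fobj a p) x) t \<longleftrightarrow>
      a * \<bar>u - t * a\<bar> - a * u - t * N \<le> - c1 * t * (a\<^sup>2 + N)"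
    unfolding armijo_def grad_eq[OF xp] line_fobj[OF xp] G_inner_d[OF xp] f0
    by (simp add: u_def N_def algebra_simps)
  show ?thesis
  proof (cases "t * a \<le> u")
    case True
    have "a * \<bar>u - t * a\<bar> - a * u - t * N = - t * (a\<^sup>2 + N)"
      using True by (simp add: power2_eq_square algebra_simps)
    moreover have "- t * (a\<^sup>2 + N) \<le> - c1 * t * (a\<^sup>2 + N)"
    proof -
      have "0 \<le> t * (a\<^sup>2 + N)" using t N by (simp add: N_def)
      moreover note c1(2)
      ultimately have "c1 * (t * (a\<^sup>2 + N)) \<le> t * (a\<^sup>2 + N)"
        using c1(1) by (intro mult_left_le_one_le) auto
      thus ?thesis by (simp add: algebra_simps)
    qed
    ultimately show ?thesis using arm True by (simp add: u_def)
  next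
    case False
    have e: "a * \<bar>u - t * a\<bar> = t * a\<^sup>2 - a * u"
      using False by (simp add: power2_eq_square algebra_simps)
    have "(a * \<bar>u - t * a\<bar> - a * u - t * N \<le> - c1 * t * (a\<^sup>2 + N)) \<longleftrightarrow>
       t * (a\<^sup>2 * (1 + c1) + N * (c1 - 1)) \<le> 2 * a * u"
      unfolding e by (simp add: algebra_simps)
    hence "armijo (fobj a p) c1 x (- grad (fobj a p) x) t \<longleftrightarrow>
       t * (a\<^sup>2 * (1 + c1) + N * (c1 - 1)) \<le> 2 * a * u"
      using arm by (simp add: algebra_simps)
    thus ?thesis using False by (simp add: u_def N_def)
  qed
qed




lemma wolfe_iff:
  fixes x :: "real^'n::finite"
  assumes xp: "x $ p \<noteq> 0" and a: "a > 0" and c2: "0 < c2" "c2 < 1"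
    and N: "real CARD('n) - 1 \<le> a\<^sup>2" "0 \<le> real CARD('n) - 1"
  shows "wolfe (fobj a p) c2 x (- grad (fobj a p) x) t \<longleftrightarrow> \<bar>x $ p\<bar> < t * a"
proof -
  define N where "N = real CARD('n) - 1"
  define u where "u = \<bar>x $ p\<bar>"
  define y where "y = x + t *\<^sub>R (- G a p x)"
  have yp: "y $ p = sgn (x $ p) * (u - t * a)" unfolding y_def u_def by (rule line_p)
  show ?thesis
  proof (cases "t * a = u")
    case True
    hence "y $ p = 0" using yp by simp
    hence "\<not> fobj a p differentiable (at y)" using fobj_nondiff[of y p a] a by auto
    thus ?thesis unfolding wolfe_def grad_eq[OF xp] using True by (simp add: y_def u_def)
  next
    case False
    hence yp0: "y $ p \<noteq> 0" using yp xp by (simp add: sgn_if)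
    have "G a p y \<bullet> (- G a p x) = a * sgn (y $ p) * (- a * sgn (x $ p)) + (\<Sum>i\<in>UNIV - {p}. - 1)"
      by (simp add: inner_G) (simp add: G_def)
    also have "\<dots> = - a\<^sup>2 * sgn (u - t * a) - N"
    proof -
      have "sgn (y $ p) * sgn (x $ p) = sgn (u - t * a)"
        using yp sgn_sq[OF xp] by (simp add: sgn_mult)
      thus ?thesis using card_minus_p[of p] by (simp add: N_def power2_eq_square algebra_simps)
    qed
    finally have gi: "G a p y \<bullet> (- G a p x) = - a\<^sup>2 * sgn (u - t * a) - N" .
    have "wolfe (fobj a p) c2 x (- grad (fobj a p) x) t \<longleftrightarrow>
        - a\<^sup>2 * sgn (u - t * a) - N \<ge> c2 * (- (a\<^sup>2 + N))"
      unfolding wolfe_def grad_eq[OF xp] G_inner_d[OF xp] y_def[symmetric] grad_eq[OF yp0] gi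
      using fobj_diff[OF yp0] by (simp add: N_def)
    also have "\<dots> \<longleftrightarrow> u < t * a"
    proof (cases "u < t * a")
      case True
      hence "- a\<^sup>2 * sgn (u - t * a) - N = a\<^sup>2 - N" by simp
      moreover have "0 \<le> a\<^sup>2 + N" using N unfolding N_def by linarith
      hence "c2 * (- (a\<^sup>2 + N)) \<le> 0" using c2
        by (intro mult_nonneg_nonpos) auto
      moreover have "a\<^sup>2 - N \<ge> 0" using N by (simp add: N_def)
      ultimately show ?thesis using True by linarith
    next
      case f: False
      hence "sgn (u - t * a) = 1" using False by simp
      moreover have "0 < a\<^sup>2 + N" using N a unfolding N_def
        by (smt (verit) zero_less_power)
      hence "c2 * (a\<^sup>2 + N) < a\<^sup>2 + N" using c2 by simp
      moreover have "c2 * (- (a\<^sup>2 + N)) = - (c2 * (a\<^sup>2 + N))" by (rule mult_minus_right)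
      ultimately show ?thesis using f by (simp only: mult_1_right eq_False)
    qed
    finally show ?thesis by (simp add: u_def)
  qed
qed




lemma ls_Suc:
  assumes "ls_state f c1 c2 x d i = (\<alpha>, \<beta>, t)"
  shows "ls_state f c1 c2 x d (Suc i) =
    (if \<not> armijo f c1 x d t then (\<alpha>, Some t, (\<alpha> + t) / 2)
     else if \<not> wolfe f c2 x d t then (t, \<beta>, case \<beta> of Some b \<Rightarrow> (t + b) / 2 | None \<Rightarrow> 2 * t)
     else (\<alpha>, \<beta>, case \<beta> of Some b \<Rightarrow> (\<alpha> + b) / 2 | None \<Rightarrow> 2 * \<alpha>))"
  using assms by (simp add: Let_def)

lemma ls_case1:
  fixes f :: "real^'n::finite \<Rightarrow> real"
  assumes hA: "\<And>t. t > 0 \<Longrightarrow> armijo f c1 x d t \<longleftrightarrow> t \<le> T"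
    and hW: "\<And>t. t > 0 \<Longrightarrow> wolfe f c2 x d t \<longleftrightarrow> L < t"
    and L1: "1 \<le> L" and LT: "2 * L \<le> T" and np: "\<And>m::nat. L \<noteq> 2 ^ m"
  shows "ls_returns f c1 c2 x d t \<longleftrightarrow> t = 2 ^ (LEAST k. L < 2 ^ k)"
proof -
  define K where "K = (LEAST k. L < (2::real) ^ k)"
  have ex: "\<exists>k. L < (2::real) ^ k" using real_arch_pow[of 2 L] by auto
  have LK: "L < 2 ^ K" unfolding K_def by (rule LeastI_ex[OF ex])
  have below: "2 ^ i < L" if "i < K" for i
  proof -
    have "\<not> L < 2 ^ i" using not_less_Least[OF that[unfolded K_def]] .
    thus ?thesis using np[of i] by simp
  qed
  have K0: "K \<noteq> 0" using LK L1 below by (metis LeastI_ex K_def ex not_le power_0 order.strict_trans1 not_less_Least)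
  have st: "ls_state f c1 c2 x d i = (if i = 0 then 0 else 2 ^ (i - 1), None, 2 ^ i)" if "i \<le> K" for i
    using that
  proof (induction i)
    case 0 thus ?case by simp
  next
    case (Suc i)
    hence IH: "ls_state f c1 c2 x d i = (if i = 0 then 0 else 2 ^ (i - 1), None, 2 ^ i)" by simp
    have b: "2 ^ i < L" using below Suc.prems by simp
    have "armijo f c1 x d (2 ^ i)" using hA[of "2 ^ i"] b LT L1 by simp
    moreover have "\<not> wolfe f c2 x d (2 ^ i)" using hW[of "2 ^ i"] b by simp
    ultimately show ?case using ls_Suc[OF IH] by simp
  qed
  have tr: "ls_trial f c1 c2 x d i = 2 ^ i" if "i \<le> K" for i
    using st[OF that] by (simp add: ls_trial_def)
  have nacc: "\<not> (armijo f c1 x d (ls_trial f c1 c2 x d i) \<and> wolfe f c2 x d (ls_trial f c1 c2 x d i))"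
    if "i < K" for i
    using tr[of i] that hW[of "2 ^ i"] below[OF that] by simp
  have acc: "armijo f c1 x d (ls_trial f c1 c2 x d K) \<and> wolfe f c2 x d (ls_trial f c1 c2 x d K)"
  proof -
    have "\<not> L < 2 ^ (K - 1)" using below[of "K - 1"] K0 by auto
    hence "(2::real) ^ K \<le> 2 * L" using K0 by (cases K) auto
    thus ?thesis using tr[of K] hA[of "2 ^ K"] hW[of "2 ^ K"] LK LT by simp
  qed
  show ?thesis
  proof
    assume "ls_returns f c1 c2 x d t"
    then obtain i where i: "armijo f c1 x d (ls_trial f c1 c2 x d i) \<and> wolfe f c2 x d (ls_trial f c1 c2 x d i)"
      "\<forall>j<i. \<not> (armijo f c1 x d (ls_trial f c1 c2 x d j) \<and> wolfe f c2 x d (ls_trial f c1 c2 x d j))"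
      "t = ls_trial f c1 c2 x d i" unfolding ls_returns_def by blast
    have "i = K" using i(1,2) nacc acc by (metis linorder_neqE_nat)
    thus "t = 2 ^ (LEAST k. L < 2 ^ k)" using i(3) tr[of K] by (simp add: K_def)
  next
    assume "t = 2 ^ (LEAST k. L < 2 ^ k)"
    thus "ls_returns f c1 c2 x d t" unfolding ls_returns_def
      using acc nacc tr[of K] by (intro exI[of _ K]) (auto simp: K_def)
  qed
qed




lemma ls_case2:
  fixes f :: "real^'n::finite \<Rightarrow> real"
  assumes hA: "\<And>t. t > 0 \<Longrightarrow> armijo f c1 x d t \<longleftrightarrow> t \<le> T"
    and hW: "\<And>t. t > 0 \<Longrightarrow> wolfe f c2 x d t \<longleftrightarrow> L < t"
    and L0: "0 < L" and L1: "L < 1" and LT: "L < T"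
  shows "(\<exists>t. ls_returns f c1 c2 x d t) \<and> (\<forall>t. ls_returns f c1 c2 x d t \<longrightarrow> t \<le> 1)"
proof -
  define acc where "acc i \<longleftrightarrow> armijo f c1 x d (ls_trial f c1 c2 x d i) \<and> wolfe f c2 x d (ls_trial f c1 c2 x d i)" for i
  have tr0: "ls_trial f c1 c2 x d 0 = 1" by (simp add: ls_trial_def)
  have ret: "ls_returns f c1 c2 x d t \<longleftrightarrow> (\<exists>i. acc i \<and> (\<forall>j<i. \<not> acc j) \<and> t = ls_trial f c1 c2 x d i)" for t
    unfolding ls_returns_def acc_def by blast
  show ?thesis
  proof (cases "1 \<le> T")
    case True
    hence a0: "acc 0" unfolding acc_def tr0 using hA[of 1] hW[of 1] L1 by simp
    have "ls_returns f c1 c2 x d 1" unfolding ret by (rule exI[of _ 0]) (use a0 tr0 in simp)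
    moreover have "t \<le> 1" if rr: "ls_returns f c1 c2 x d t" for t
    proof -
      obtain i where i: "acc i" "\<forall>j<i. \<not> acc j" "t = ls_trial f c1 c2 x d i" using rr[unfolded ret] by blast
      have "i = 0" using i(2) a0 by (cases i) auto
      thus ?thesis using i(3) tr0 by simp
    qed
    ultimately show ?thesis by blast
  next
    case False
    have st1: "ls_state f c1 c2 x d (Suc 0) = (0, Some 1, 1 / 2)"
      using ls_Suc[of f c1 c2 x d 0 0 None 1] hA[of 1] False by simp
    have inv: "\<exists>\<alpha> b. ls_state f c1 c2 x d (Suc j) = (\<alpha>, Some b, (\<alpha> + b) / 2) \<and> 0 \<le> \<alpha> \<and> \<alpha> \<le> L \<and>
         T < b \<and> b \<le> 1 \<and> b - \<alpha> = 1 / 2 ^ j" if "\<forall>i<j. \<not> acc (Suc i)" for j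
      using that
    proof (induction j)
      case 0 show ?case unfolding st1 using False L0 by auto
    next
      case (Suc j)
      then obtain \<alpha> b where ab: "ls_state f c1 c2 x d (Suc j) = (\<alpha>, Some b, (\<alpha> + b) / 2)" "0 \<le> \<alpha>" "\<alpha> \<le> L"
         "T < b" "b \<le> 1" "b - \<alpha> = 1 / 2 ^ j" by auto
      define t where "t = (\<alpha> + b) / 2"
      have "0 < \<alpha> + b" using ab LT L0 by linarith
      hence t0: "0 < t" unfolding t_def by simp
      have trj: "ls_trial f c1 c2 x d (Suc j) = t" using ab(1) by (simp add: ls_trial_def t_def)
      have na: "\<not> (armijo f c1 x d t \<and> wolfe f c2 x d t)" using Suc.prems trj unfolding acc_def by auto
      have stS: "ls_state f c1 c2 x d (Suc (Suc j)) =
        (if \<not> armijo f c1 x d t then (\<alpha>, Some t, (\<alpha> + t) / 2)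
         else if \<not> wolfe f c2 x d t then (t, Some b, (t + b) / 2)
         else (\<alpha>, Some b, (\<alpha> + b) / 2))"
        using ls_Suc[OF ab(1)] by (simp add: t_def)
      show ?case
      proof (cases "armijo f c1 x d t")
        case False
        hence "T < t" using hA[OF t0] by simp
        moreover have "t \<le> 1" using ab(3,4,5) LT unfolding t_def by (simp add: field_simps)
        moreover have "t - \<alpha> = (b - \<alpha>) / 2" unfolding t_def by (simp add: field_simps)
        hence "t - \<alpha> = 1 / 2 ^ Suc j" using ab(6) by simp
        ultimately show ?thesis unfolding stS using False ab(2-6) by auto
      next
        case True
        hence "\<not> wolfe f c2 x d t" using na by simp
        hence "t \<le> L" using hW[OF t0] by simp
        moreover have "b - t = (b - \<alpha>) / 2" unfolding t_def by (simp add: field_simps)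
        hence "b - t = 1 / 2 ^ Suc j" using ab(6) by simp
        ultimately show ?thesis unfolding stS using True \<open>\<not> wolfe f c2 x d t\<close> ab(2-6) t0 by auto
      qed
    qed
    have "\<exists>i. acc i"
    proof (rule ccontr)
      assume "\<not> (\<exists>i. acc i)"
      obtain j where j: "(1 / 2 :: real) ^ j < T - L" using real_arch_pow_inv[of "T - L" "1/2"] LT by auto
      obtain \<alpha> b where "0 \<le> \<alpha>" "\<alpha> \<le> L" "T < b" "b - \<alpha> = 1 / 2 ^ j"
        using inv[of j] \<open>\<not> (\<exists>i. acc i)\<close> by blast
      thus False using j by (simp add: power_one_over)
    qed
    then obtain i where i: "acc i" "\<forall>j<i. \<not> acc j"
      using exists_least_iff[of acc] by blast
    have "ls_returns f c1 c2 x d (ls_trial f c1 c2 x d i)" unfolding ret using i by (intro exI[of _ i]) simp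
    moreover have "t \<le> 1" if rr: "ls_returns f c1 c2 x d t" for t
    proof -
      obtain i where i: "acc i" "\<forall>j<i. \<not> acc j" "t = ls_trial f c1 c2 x d i" using rr[unfolded ret] by blast
      show ?thesis
      proof (cases i)
        case 0 thus ?thesis using i tr0 by simp
      next
        case (Suc j)
        then obtain \<alpha> b where "ls_state f c1 c2 x d (Suc j) = (\<alpha>, Some b, (\<alpha> + b) / 2)" "0 \<le> \<alpha>" "\<alpha> \<le> L"
          "T < b" "b \<le> 1"
          using inv[of j] i(2) by auto
        thus ?thesis using i(3) Suc LT by (simp add: ls_trial_def)
      qed
    qed
    ultimately show ?thesis by blast
  qed
qed




locale setting =
  fixes a c1 c2 :: real and p :: "'n::finite"
  assumes a: "a > 0" and c1: "0 < c1" "c1 < c2" and c2: "c2 < 1"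
    and N: "real CARD('n) - 1 \<le> a\<^sup>2" "0 \<le> real CARD('n) - 1"
    and tau: "c1 * a\<^sup>2 + (real CARD('n) - 1) * (c1 - 1) \<le> 0"
begin

definition D where "D = a\<^sup>2 * (1 + c1) + (real CARD('n) - 1) * (c1 - 1)"

lemma D_pos: "D > 0"
proof -
  have "D \<ge> (real CARD('n) - 1) * (1 + c1) + (real CARD('n) - 1) * (c1 - 1)"
    unfolding D_def using N c1 by (intro add_right_mono mult_right_mono) auto
  hence "D \<ge> 2 * c1 * (real CARD('n) - 1)" by (simp add: algebra_simps)
  moreover have "D > 0" if "real CARD('n) - 1 = 0" using that a c1 unfolding D_def by simp
  moreover have "2 * c1 * (real CARD('n) - 1) > 0" if "real CARD('n) - 1 \<noteq> 0"
  proof -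
    have "real CARD('n) - 1 > 0" using that N(2) by linarith
    thus ?thesis using c1 by simp
  qed
  ultimately show ?thesis by fastforce
qed

lemma D_le: "D \<le> a\<^sup>2" using tau unfolding D_def by (simp add: algebra_simps)

lemma hA:
  fixes x :: "real^'n"
  assumes xp: "x $ p \<noteq> 0" and t: "t > 0"
  shows "armijo (fobj a p) c1 x (- grad (fobj a p) x) t \<longleftrightarrow> t \<le> 2 * a * \<bar>x $ p\<bar> / D"
proof -
  have e: "armijo (fobj a p) c1 x (- grad (fobj a p) x) t \<longleftrightarrow> t * D \<le> 2 * a * \<bar>x $ p\<bar> \<or> t * a \<le> \<bar>x $ p\<bar>"
    using armijo_iff[OF xp a c1(1) _ N tau, of t] c1 c2 t unfolding D_def by simp
  have "t * D \<le> 2 * a * \<bar>x $ p\<bar> \<longleftrightarrow> t \<le> 2 * a * \<bar>x $ p\<bar> / D" using D_pos by (simp add: field_simps)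
  moreover have "t * D \<le> 2 * a * \<bar>x $ p\<bar>" if "t * a \<le> \<bar>x $ p\<bar>"
  proof -
    have "t * D \<le> t * a\<^sup>2" using D_le t by simp
    also have "\<dots> = a * (t * a)" by (simp add: power2_eq_square)
    also have "\<dots> \<le> a * \<bar>x $ p\<bar>" using that a by simp
    also have "\<dots> \<le> 2 * a * \<bar>x $ p\<bar>" using a by simp
    finally show ?thesis .
  qed
  ultimately show ?thesis using e by blast
qed

lemma hW:
  fixes x :: "real^'n"
  assumes xp: "x $ p \<noteq> 0" and t: "t > 0"
  shows "wolfe (fobj a p) c2 x (- grad (fobj a p) x) t \<longleftrightarrow> \<bar>x $ p\<bar> / a < t"
  using wolfe_iff[OF xp a _ c2 N, of t] c1 a by (simp add: field_simps)

lemma LT: "2 * (\<bar>x $ p\<bar> / a) \<le> 2 * a * \<bar>x $ p\<bar> / D"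
proof -
  have "2 * (\<bar>x $ p\<bar> / a) = 2 * a * \<bar>x $ p\<bar> / a\<^sup>2" using a by (simp add: power2_eq_square)
  also have "\<dots> \<le> 2 * a * \<bar>x $ p\<bar> / D" using D_pos D_le a
    by (intro divide_left_mono) auto
  finally show ?thesis .
qed

definition gmap :: "real \<Rightarrow> real" where
  "gmap u = a * 2 ^ (LEAST k. u / a < 2 ^ k) - u"

lemma step_big:
  fixes x :: "real^'n"
  assumes u: "a \<le> \<bar>x $ p\<bar>" and np: "\<And>m::nat. \<bar>x $ p\<bar> \<noteq> a * 2 ^ m"
  shows "\<exists>t. ls_returns (fobj a p) c1 c2 x (- grad (fobj a p) x) t"
    and "ls_returns (fobj a p) c1 c2 x (- grad (fobj a p) x) t \<Longrightarrow>
          \<bar>(x + t *\<^sub>R (- grad (fobj a p) x)) $ p\<bar> = gmap \<bar>x $ p\<bar>"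
proof -
  have xp: "x $ p \<noteq> 0" using u a by auto
  let ?L = "\<bar>x $ p\<bar> / a"
  have L1: "1 \<le> ?L" using u a by simp
  have np': "?L \<noteq> 2 ^ m" for m :: nat using np[of m] a by (auto simp: field_simps)
  have LT': "2 * ?L \<le> 2 * a * \<bar>x $ p\<bar> / D" using LT[of x] by simp
  note c = ls_case1[OF hA[OF xp] hW[OF xp] L1 LT' np']
  show "\<exists>t. ls_returns (fobj a p) c1 c2 x (- grad (fobj a p) x) t" using c by blast
  assume "ls_returns (fobj a p) c1 c2 x (- grad (fobj a p) x) t"
  hence t: "t = 2 ^ (LEAST k. ?L < 2 ^ k)" using c by blast
  have "?L < t" using t LeastI_ex[of "\<lambda>k. ?L < 2 ^ k"] real_arch_pow[of 2 ?L] by auto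
  hence "\<bar>x $ p\<bar> < t * a" using a by (simp add: field_simps)
  thus "\<bar>(x + t *\<^sub>R (- grad (fobj a p) x)) $ p\<bar> = gmap \<bar>x $ p\<bar>"
    unfolding grad_eq[OF xp] line_p abs_mult gmap_def using xp t by (simp add: algebra_simps)
qed

lemma step_small:
  fixes x :: "real^'n"
  assumes u: "0 < \<bar>x $ p\<bar>" "\<bar>x $ p\<bar> < a"
  shows "\<exists>t. ls_returns (fobj a p) c1 c2 x (- grad (fobj a p) x) t"
    and "ls_returns (fobj a p) c1 c2 x (- grad (fobj a p) x) t \<Longrightarrow>
          0 < \<bar>(x + t *\<^sub>R (- grad (fobj a p) x)) $ p\<bar> \<and> \<bar>(x + t *\<^sub>R (- grad (fobj a p) x)) $ p\<bar> < a"
proof -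
  have xp: "x $ p \<noteq> 0" using u by auto
  let ?L = "\<bar>x $ p\<bar> / a"
  have L0: "0 < ?L" "?L < 1" using u a by auto
  have LT': "?L < 2 * a * \<bar>x $ p\<bar> / D" using LT[of x] L0 by linarith
  note c = ls_case2[OF hA[OF xp] hW[OF xp] L0 LT']
  show "\<exists>t. ls_returns (fobj a p) c1 c2 x (- grad (fobj a p) x) t" using c by blast
  assume r: "ls_returns (fobj a p) c1 c2 x (- grad (fobj a p) x) t"
  hence t1: "t \<le> 1" using c by blast
  from r obtain i where "wolfe (fobj a p) c2 x (- grad (fobj a p) x) t"
    unfolding ls_returns_def by blast
  moreover have "t > 0"
  proof (rule ccontr)
    assume "\<not> t > 0"
    hence "t * a \<le> 0" using a by (simp add: mult_nonpos_nonneg)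
    moreover from r obtain i where "wolfe (fobj a p) c2 x (- grad (fobj a p) x) t"
      unfolding ls_returns_def by blast
    hence "\<bar>x $ p\<bar> < t * a" using wolfe_iff[OF xp a _ c2 N, of t] c1 by simp
    ultimately show False using u by simp
  qed
  ultimately have "?L < t" using hW[OF xp] by blast
  hence "\<bar>x $ p\<bar> < t * a" using a by (simp add: field_simps)
  moreover have at: "a * t \<le> a" using t1 a by (simp add: mult_left_le)
  ultimately show "0 < \<bar>(x + t *\<^sub>R (- grad (fobj a p) x)) $ p\<bar> \<and> \<bar>(x + t *\<^sub>R (- grad (fobj a p) x)) $ p\<bar> < a"
    unfolding grad_eq[OF xp] line_p abs_mult using xp u by (simp add: algebra_simps) (use at in linarith)
qed

end




lemma hyper_null:
  fixes p :: "'n::finite" and c :: real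
  shows "{x::real^'n. x $ p = c} \<in> null_sets lborel"
proof -
  have "negligible {x::real^'n. x \<bullet> axis p 1 = c}"
    by (rule negligible_standard_hyperplane) simp
  hence ng: "negligible {x::real^'n. x $ p = c}" by (simp add: cart_eq_inner_axis)
  have m: "{x::real^'n. x $ p = c} \<in> sets lborel" by measurable
  from ng have "{x::real^'n. x $ p = c} \<in> null_sets lebesgue" by (simp add: negligible_iff_null_sets)
  thus ?thesis using null_sets_completion_iff[OF m] by simp
qed

lemma meas_dens: "(\<lambda>x::real^'n::finite. ennreal (\<Prod>i\<in>UNIV. std_normal_density (x $ i))) \<in> borel_measurable lborel"
  by measurable




primrec Cs :: "real \<Rightarrow> nat \<Rightarrow> real set" where
  "Cs a 0 = range (\<lambda>m::nat. a * 2 ^ m)"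
| "Cs a (Suc j) = (\<lambda>(k::nat, v). a * 2 ^ k - v) ` (UNIV \<times> Cs a j)"

definition Bad :: "real \<Rightarrow> real set" where "Bad a = (\<Union>j. Cs a j)"

lemma countable_Cs: "countable (Cs a j)"
  by (induction j) (auto intro!: countable_image countable_SIGMA)

lemma countable_Bad: "countable (Bad a)"
  unfolding Bad_def by (intro countable_UN countable_Cs) auto

lemma pow_in_Bad: "a * 2 ^ m \<in> Bad a"
  unfolding Bad_def by (rule UN_I[of 0]) auto

context setting begin

lemma gmap_props:
  assumes "a \<le> u"
  shows "0 < gmap u" and "\<And>r. u < a * 2 ^ r \<Longrightarrow> gmap u \<le> a * 2 ^ (r - 1)"
    and "u \<notin> Bad a \<Longrightarrow> gmap u \<notin> Bad a"
proof -
  define K where "K = (LEAST k. u / a < (2::real) ^ k)"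
  have ex: "\<exists>k. u / a < (2::real) ^ k" using real_arch_pow[of 2 "u / a"] by auto
  have LK: "u / a < 2 ^ K" unfolding K_def by (rule LeastI_ex[OF ex])
  hence uK: "u < a * 2 ^ K" using a by (simp add: field_simps)
  have g: "gmap u = a * 2 ^ K - u" by (simp add: gmap_def K_def)
  show "0 < gmap u" using g uK by simp
  have K0: "K \<noteq> 0"
  proof
    assume "K = 0"
    hence "u / a < 1" using LK by simp
    thus False using assms a by (simp add: field_simps)
  qed
  have "\<not> u / a < 2 ^ (K - 1)" unfolding K_def by (rule not_less_Least) (use K0 K_def in simp)
  hence "a * 2 ^ (K - 1) \<le> u" using a by (simp add: field_simps)
  moreover have "a * (2::real) ^ K = 2 * (a * 2 ^ (K - 1))" using K0 by (cases K) auto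
  ultimately have gle: "gmap u \<le> a * 2 ^ (K - 1)" unfolding g by linarith
  show "gmap u \<le> a * 2 ^ (r - 1)" if "u < a * 2 ^ r" for r
  proof -
    have "u / a < 2 ^ r" using that a by (simp add: field_simps)
    hence "K \<le> r" unfolding K_def by (rule Least_le)
    hence "(2::real) ^ (K - 1) \<le> 2 ^ (r - 1)" by (intro power_increasing) auto
    thus ?thesis using gle a by (smt (verit) mult_left_mono)
  qed
  show "gmap u \<notin> Bad a" if "u \<notin> Bad a"
  proof
    assume "gmap u \<in> Bad a"
    then obtain j where "gmap u \<in> Cs a j" unfolding Bad_def by auto
    hence "a * 2 ^ K - gmap u \<in> Cs a (Suc j)" by force
    hence "u \<in> Cs a (Suc j)" using g by simp
    hence "u \<in> Bad a" unfolding Bad_def by blast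
    thus False using that by simp
  qed
qed

definition Good :: "real^'n \<Rightarrow> bool" where
  "Good y \<longleftrightarrow> (0 < \<bar>y $ p\<bar> \<and> \<bar>y $ p\<bar> < a) \<or> (a \<le> \<bar>y $ p\<bar> \<and> \<bar>y $ p\<bar> \<notin> Bad a)"

lemma Good_step:
  assumes "Good y"
  shows "y $ p \<noteq> 0" "\<exists>t. ls_returns (fobj a p) c1 c2 y (- grad (fobj a p) y) t"
    "ls_returns (fobj a p) c1 c2 y (- grad (fobj a p) y) t \<Longrightarrow> Good (y + t *\<^sub>R (- grad (fobj a p) y))"
    "ls_returns (fobj a p) c1 c2 y (- grad (fobj a p) y) t \<Longrightarrow> \<bar>y $ p\<bar> < a \<Longrightarrow>
        \<bar>(y + t *\<^sub>R (- grad (fobj a p) y)) $ p\<bar> < a"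
    "ls_returns (fobj a p) c1 c2 y (- grad (fobj a p) y) t \<Longrightarrow> a \<le> \<bar>y $ p\<bar> \<Longrightarrow>
        \<bar>(y + t *\<^sub>R (- grad (fobj a p) y)) $ p\<bar> = gmap \<bar>y $ p\<bar> \<and> \<bar>y $ p\<bar> \<notin> Bad a"
proof -
  show "y $ p \<noteq> 0" using assms a unfolding Good_def by auto
  have np: "\<bar>y $ p\<bar> \<noteq> a * 2 ^ m" if "\<bar>y $ p\<bar> \<notin> Bad a" for m :: nat
    using that pow_in_Bad[of a m] by auto
  show "\<exists>t. ls_returns (fobj a p) c1 c2 y (- grad (fobj a p) y) t"
    using assms step_small(1)[of y] step_big(1)[of y] np unfolding Good_def by blast
  show "Good (y + t *\<^sub>R (- grad (fobj a p) y))" if r: "ls_returns (fobj a p) c1 c2 y (- grad (fobj a p) y) t"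
  proof (cases "\<bar>y $ p\<bar> < a")
    case True thus ?thesis using assms step_small(2)[OF _ _ r] unfolding Good_def by auto
  next
    case False
    hence big: "a \<le> \<bar>y $ p\<bar>" "\<bar>y $ p\<bar> \<notin> Bad a" using assms unfolding Good_def by auto
    have e: "\<bar>(y + t *\<^sub>R (- grad (fobj a p) y)) $ p\<bar> = gmap \<bar>y $ p\<bar>"
      using step_big(2)[OF big(1) np[OF big(2)] r] by blast
    show ?thesis unfolding Good_def e using gmap_props[OF big(1)] big(2) by auto
  qed
  show "\<bar>(y + t *\<^sub>R (- grad (fobj a p) y)) $ p\<bar> < a"
    if "ls_returns (fobj a p) c1 c2 y (- grad (fobj a p) y) t" "\<bar>y $ p\<bar> < a"
    using assms step_small(2)[OF _ that(2) that(1)] that(2) unfolding Good_def by auto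
  show "\<bar>(y + t *\<^sub>R (- grad (fobj a p) y)) $ p\<bar> = gmap \<bar>y $ p\<bar> \<and> \<bar>y $ p\<bar> \<notin> Bad a"
    if r: "ls_returns (fobj a p) c1 c2 y (- grad (fobj a p) y) t" "a \<le> \<bar>y $ p\<bar>"
  proof -
    have "\<bar>y $ p\<bar> \<notin> Bad a" using assms that(2) pow_in_Bad[of a 0] unfolding Good_def by auto
    thus ?thesis using step_big(2)[OF that(2) np r(1)] by blast
  qed
qed

end




context setting begin

lemma det_exists:
  assumes x0: "Good x0"
  shows "\<exists>xs. xs 0 = x0 \<and> gd_seq (fobj a p) c1 c2 xs"
proof -
  define tt where "tt y = (SOME t. ls_returns (fobj a p) c1 c2 y (- grad (fobj a p) y) t)" for y
  define step where "step y = y + tt y *\<^sub>R (- grad (fobj a p) y)" for y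
  define xs where "xs k = (step ^^ k) x0" for k
  have tt: "ls_returns (fobj a p) c1 c2 y (- grad (fobj a p) y) (tt y)" if "Good y" for y
    unfolding tt_def using Good_step(2)[OF that] by (rule someI_ex)
  have G: "Good (xs k)" for k
  proof (induction k)
    case 0 thus ?case using x0 by (simp add: xs_def)
  next
    case (Suc k)
    have "xs (Suc k) = step (xs k)" by (simp add: xs_def)
    thus ?case using Good_step(3)[OF Suc tt[OF Suc]] by (simp add: step_def)
  qed
  have "gd_seq (fobj a p) c1 c2 xs"
    unfolding gd_seq_def
  proof
    fix k
    show "fobj a p differentiable at (xs k) \<and>
         (\<exists>t. ls_returns (fobj a p) c1 c2 (xs k) (- grad (fobj a p) (xs k)) t \<and>
              xs (Suc k) = xs k + t *\<^sub>R - grad (fobj a p) (xs k))"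
      using fobj_diff[OF Good_step(1)[OF G[of k]]] tt[OF G[of k]]
      by (auto simp: xs_def step_def)
  qed
  moreover have "xs 0 = x0" by (simp add: xs_def)
  ultimately show ?thesis by blast
qed

lemma det_all:
  assumes x0: "a < \<bar>x0 $ p\<bar>" "\<bar>x0 $ p\<bar> \<notin> Bad a"
    and xs: "xs 0 = x0" "gd_seq (fobj a p) c1 c2 xs"
  shows "\<exists>j. int j \<le> \<lceil>log 2 (\<bar>x0 $ p\<bar> / a)\<rceil> \<and> \<bar>xs j $ p\<bar> < a \<and> (\<forall>k\<ge>j. \<bar>xs k $ p\<bar> < a)"
proof -
  have ts: "\<exists>t. ls_returns (fobj a p) c1 c2 (xs k) (- grad (fobj a p) (xs k)) t \<and>
              xs (Suc k) = xs k + t *\<^sub>R - grad (fobj a p) (xs k)" for k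
    using xs(2) unfolding gd_seq_def by blast
  have G: "Good (xs k)" for k
  proof (induction k)
    case 0 thus ?case using x0 xs(1) by (simp add: Good_def)
  next
    case (Suc k)
    thus ?case using ts[of k] Good_step(3)[OF Suc] by auto
  qed
  define u where "u k = \<bar>xs k $ p\<bar>" for k
  have small: "u (Suc k) < a" if "u k < a" for k
    using ts[of k] Good_step(4)[OF G[of k]] that unfolding u_def by auto
  have big: "u (Suc k) = gmap (u k) \<and> u k \<notin> Bad a" if "a \<le> u k" for k
    using ts[of k] Good_step(5)[OF G[of k]] that unfolding u_def by auto
  define r where "r = log 2 (\<bar>x0 $ p\<bar> / a)"
  have r0: "0 < r" unfolding r_def using x0(1) a by simp
  define m where "m = nat \<lceil>r\<rceil>"
  have mr: "real m = real_of_int \<lceil>r\<rceil>" using r0 by (simp add: m_def)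
  have "\<bar>x0 $ p\<bar> / a = 2 powr r" unfolding r_def using x0(1) a by simp
  also have "\<dots> \<le> 2 powr (real m)" unfolding mr by (intro powr_mono) auto
  also have "\<dots> = 2 ^ m" by (simp add: powr_realpow)
  finally have u0: "u 0 \<le> a * 2 ^ m" using a xs(1) by (simp add: u_def field_simps)
  have Q: "u j < a \<or> (a \<le> u j \<and> u j \<notin> Bad a \<and> u j \<le> a * 2 ^ (m - j))" if "j \<le> m" for j
    using that
  proof (induction j)
    case 0 thus ?case using u0 x0 xs(1) by (auto simp: u_def)
  next
    case (Suc j)
    hence IH: "u j < a \<or> (a \<le> u j \<and> u j \<notin> Bad a \<and> u j \<le> a * 2 ^ (m - j))" by simp
    show ?case
    proof (cases "u j < a")
      case True thus ?thesis using small by blast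
    next
      case False
      hence h: "a \<le> u j" "u j \<notin> Bad a" "u j \<le> a * 2 ^ (m - j)" using IH by auto
      have "u j \<noteq> a * 2 ^ (m - j)" using h(2) pow_in_Bad[of a "m - j"] by auto
      hence "u j < a * 2 ^ (m - j)" using h(3) by simp
      hence g1: "gmap (u j) \<le> a * 2 ^ (m - j - 1)" using gmap_props(2)[OF h(1)] by blast
      have g2: "gmap (u j) \<notin> Bad a" using gmap_props(3)[OF h(1) h(2)] .
      have g3: "u (Suc j) = gmap (u j)" using big[OF h(1)] by blast
      have e: "m - Suc j = m - j - 1" by simp
      have A: "u (Suc j) \<le> a * 2 ^ (m - Suc j)" unfolding e g3 by (rule g1)
      have B: "u (Suc j) \<notin> Bad a" unfolding g3 by (rule g2)
      show ?thesis using A B by (cases "u (Suc j) < a") simp_all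
    qed
  qed
  have um: "u m < a"
  proof -
    have "\<not> (a \<le> u m \<and> u m \<notin> Bad a \<and> u m \<le> a * 2 ^ (m - m))"
      using pow_in_Bad[of a 0] by auto
    thus ?thesis using Q[of m] by auto
  qed
  have all: "u k < a" if "m \<le> k" for k
    using that
  proof (induction k rule: dec_induct)
    case base thus ?case by (rule um)
  next
    case (step k) thus ?case using small by blast
  qed
  have "int m \<le> \<lceil>r\<rceil>" using r0 by (simp add: m_def)
  thus ?thesis using um all unfolding u_def r_def by blast
qed

end




lemma AE_notbad:
  fixes p :: "'n::finite"
  shows "AE x in (std_gauss :: (real^'n) measure). \<bar>x $ p\<bar> \<notin> Bad a"
proof -
  have nul: "(\<Union>c\<in>Bad a. {x::real^'n. x $ p = c} \<union> {x. x $ p = - c}) \<in> null_sets lborel"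
    using countable_Bad by (intro null_sets_UN' null_sets.Un hyper_null) auto
  have "AE x in lborel. \<bar>(x::real^'n) $ p\<bar> \<notin> Bad a"
  proof (rule AE_I'[OF nul], rule subsetI)
    fix x :: "real^'n"
    assume "x \<in> {x \<in> space lborel. \<not> \<bar>x $ p\<bar> \<notin> Bad a}"
    hence b: "\<bar>x $ p\<bar> \<in> Bad a" by simp
    have "x \<in> {x::real^'n. x $ p = \<bar>x $ p\<bar>} \<union> {x. x $ p = - \<bar>x $ p\<bar>}"
      by (cases "x $ p \<ge> 0") auto
    thus "x \<in> (\<Union>c\<in>Bad a. {x::real^'n. x $ p = c} \<union> {x. x $ p = - c})"
      using b by blast
  qed
  thus ?thesis unfolding std_gauss_def
    by (subst AE_density[OF meas_dens]) (auto elim: eventually_mono)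
qed

theorem theorem3:
  fixes a c1 c2 :: real and p :: "'n::finite"
  assumes "CARD('n) \<ge> 2"
    and "a \<ge> sqrt (real CARD('n) - 1)"
    and "0 < c1" and "c1 < c2" and "c2 < 1"
    and "c1 + (real CARD('n) - 1) * (c1 - 1) / a\<^sup>2 \<le> 0"
  shows "AE x0 in (std_gauss :: (real^'n) measure).
           \<bar>x0 $ p\<bar> > a \<longrightarrow>
             (\<exists>xs. xs 0 = x0 \<and> gd_seq (fobj a p) c1 c2 xs) \<and>
             (\<forall>xs. xs 0 = x0 \<and> gd_seq (fobj a p) c1 c2 xs \<longrightarrow>
                (\<exists>j. int j \<le> \<lceil>log 2 (\<bar>x0 $ p\<bar> / a)\<rceil> \<and> \<bar>xs j $ p\<bar> < a \<and>
                     (\<forall>k\<ge>j. \<bar>xs k $ p\<bar> < a)))"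
proof -
  have N0: "1 \<le> real CARD('n) - 1" using assms(1) by simp
  hence s1: "1 \<le> sqrt (real CARD('n) - 1)" by simp
  hence a0: "a > 0" using assms(2) by linarith
  have "(sqrt (real CARD('n) - 1))\<^sup>2 \<le> a\<^sup>2" using assms(2) s1 by (intro power_mono) auto
  hence Na: "real CARD('n) - 1 \<le> a\<^sup>2" using N0 by simp
  have "a\<^sup>2 * (c1 + (real CARD('n) - 1) * (c1 - 1) / a\<^sup>2) \<le> 0"
    using assms(6) by (intro mult_nonneg_nonpos) auto
  moreover have "a\<^sup>2 * (c1 + (real CARD('n) - 1) * (c1 - 1) / a\<^sup>2) = c1 * a\<^sup>2 + (real CARD('n) - 1) * (c1 - 1)"
    using a0 by (simp add: field_simps)
  ultimately have tau: "c1 * a\<^sup>2 + (real CARD('n) - 1) * (c1 - 1) \<le> 0" by simp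
  interpret setting a c1 c2 p
    by unfold_locales (use a0 assms(3-5) Na N0 tau in auto)
  show ?thesis
    using AE_notbad[of p a]
  proof (rule eventually_mono)
    fix x0 :: "real^'n"
    assume nb: "\<bar>x0 $ p\<bar> \<notin> Bad a"
    show "\<bar>x0 $ p\<bar> > a \<longrightarrow>
             (\<exists>xs. xs 0 = x0 \<and> gd_seq (fobj a p) c1 c2 xs) \<and>
             (\<forall>xs. xs 0 = x0 \<and> gd_seq (fobj a p) c1 c2 xs \<longrightarrow>
                (\<exists>j. int j \<le> \<lceil>log 2 (\<bar>x0 $ p\<bar> / a)\<rceil> \<and> \<bar>xs j $ p\<bar> < a \<and>
                     (\<forall>k\<ge>j. \<bar>xs k $ p\<bar> < a)))"
    proof
      assume x: "\<bar>x0 $ p\<bar> > a"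
      have "Good x0" unfolding Good_def using x nb by auto
      thus "(\<exists>xs. xs 0 = x0 \<and> gd_seq (fobj a p) c1 c2 xs) \<and>
             (\<forall>xs. xs 0 = x0 \<and> gd_seq (fobj a p) c1 c2 xs \<longrightarrow>
                (\<exists>j. int j \<le> \<lceil>log 2 (\<bar>x0 $ p\<bar> / a)\<rceil> \<and> \<bar>xs j $ p\<bar> < a \<and>
                     (\<forall>k\<ge>j. \<bar>xs k $ p\<bar> < a)))"
        using det_exists det_all[OF x nb] by blast
    qed
  qed
qed


end
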